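(* Let $\alpha,\tilde\alpha,\beta,\gamma\in\mathbb{R}$ and let $f\colon\mathbb{R}^4\to\mathbb{R}^4$ be defined by \[ f(x,y,z,\omega)=\big(y,\ \alpha x+\beta z+\gamma\sin(x),\ \omega,\ \tilde\alpha x-\beta z-\gamma\sin(x)\big). \] If $\tilde\alpha=-\alpha$ and $\beta\neq0$, then $f$ is not topologically transitive.
   Context: A map $f\colon\mathbb{R}^k\to\mathbb{R}^k$ is topologically transitive if for all (nonempty) open sets $V,W\subset\mathbb{R}^k$ there exists $n\ge1$ such that $V\cap f^{(n)}(W)\neq\emptyset$, where $f^{(n)}$ denotes the $n$-th iterate. *)

theory Defs
  imports "HOL-Analysis.Analysis"
begin

definition top_transitive :: "('a::topological_space \<Rightarrow> 'a) \<Rightarrow> bool" where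
  "top_transitive f \<longleftrightarrow>
     (\<forall>V W. open V \<and> V \<noteq> {} \<and> open W \<and> W \<noteq> {} \<longrightarrow>
        (\<exists>n::nat. n \<ge> 1 \<and> V \<inter> (f ^^ n) ` W \<noteq> {}))"

definition fmap :: "real \<Rightarrow> real \<Rightarrow> real \<Rightarrow> real \<Rightarrow> real^4 \<Rightarrow> real^4" where
  "fmap \<alpha> \<alpha>' \<beta> \<gamma> v =
     vector [v$2,
             \<alpha> * v$1 + \<beta> * v$3 + \<gamma> * sin (v$1),
             v$4,
             \<alpha>' * v$1 - \<beta> * v$3 - \<gamma> * sin (v$1)]"

end

theory Submission
  imports Defs
begin

lemma vector_4:
 "(vector [x,y,z,w] ::('a::zero)^4)$1 = x"
 "(vector [x,y,z,w] ::('a::zero)^4)$2 = y"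
 "(vector [x,y,z,w] ::('a::zero)^4)$3 = z"
 "(vector [x,y,z,w] ::('a::zero)^4)$4 = w"
  unfolding vector_def by simp_all

lemma fmap_sum:
  assumes "\<alpha>' = - \<alpha>"
  shows "fmap \<alpha> \<alpha>' \<beta> \<gamma> u $ 2 + fmap \<alpha> \<alpha>' \<beta> \<gamma> u $ 4 = 0"
  using assms by (simp add: fmap_def vector_4)

theorem proposition1:
  fixes \<alpha> \<alpha>' \<beta> \<gamma> :: real
  assumes "\<alpha>' = - \<alpha>" and "\<beta> \<noteq> 0"
  shows "\<not> top_transitive (fmap \<alpha> \<alpha>' \<beta> \<gamma>)"
proof
  assume T: "top_transitive (fmap \<alpha> \<alpha>' \<beta> \<gamma>)"
  define V :: "(real^4) set" where "V = {v. v$2 + v$4 > 0}"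
  have oV: "open V" unfolding V_def
    by (intro open_Collect_less continuous_intros)
  have "(vector [0,1,0,1] :: real^4) \<in> V" unfolding V_def by (simp add: vector_4)
  then have nV: "V \<noteq> {}" by auto
  obtain n :: nat where n: "n \<ge> 1" "V \<inter> (fmap \<alpha> \<alpha>' \<beta> \<gamma> ^^ n) ` UNIV \<noteq> {}"
    using T oV nV unfolding top_transitive_def by (metis open_UNIV UNIV_not_empty)
  then obtain m where m: "n = Suc m" by (cases n) auto
  have "\<And>u. (fmap \<alpha> \<alpha>' \<beta> \<gamma> ^^ n) u \<notin> V"
    using fmap_sum[OF assms(1)] unfolding m V_def by simp
  with n(2) show False by auto
qed

end
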